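(* Let $P$ be a path producible by a tile assembly system $\mathcal T=(T,\sigma,1)$ such that the last glue of $P$ (the glue between $P_{|P|-2}$ and $P_{|P|-1}$) is visible from the north. Let $i,j\in\{0,1,\dots,|P|-2\}$. If the glues $\mathrm{glue}_P(i)$ and $\mathrm{glue}_P(j)$ are both visible from the south, $\mathrm{glue}_P(i)$ points east and $x_{P_i}<x_{P_j}$, then $i<j$ and $\mathrm{glue}_P(j)$ points east. Symmetrically, if both are visible from the south, $\mathrm{glue}_P(i)$ points west and $x_{P_i}>x_{P_j}$, then $i<j$ and $\mathrm{glue}_P(j)$ points west.
   Context: Abstract Tile Assembly Model (aTAM) at temperature 1: $T$ is a finite set of tile types (unit squares with a glue type and nonnegative strength on each side); a tile is a pair $((x,y),t)\in\mathbb Z^2\times T$; two adjacent tiles interact if their abutting glues have equal type and strength $\ge1$; a tile assembly system $\mathcal T=(T,\sigma,1)$ has a finite connected seed assembly $\sigma$, and producible assemblies are grown from $\sigma$ by repeatedly adding a single tile that interacts with at least one existing tile. A path is a sequence $P=P_0P_1\dots$ of tiles with pairwise distinct positions, consecutive ones adjacent and interacting; $x_{P_i},y_{P_i}$ are the coordinates of $P_i$. $P$ is producible if its tiles avoid the positions of $\sigma$, $\sigma\cup\{P_0,P_1,\dots\}$ is producible and $P_0$ interacts with a tile of $\sigma$. For $0\le i\le |P|-2$, $\mathrm{glue}_P(i)$ is the glue shared by $P_i$ and $P_{i+1}$; its type is the common glue type, its position is the midpoint of the segment from $\mathrm{pos}(P_i)$ to $\mathrm{pos}(P_{i+1})$;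 it points east, west, north or south according as $\mathrm{pos}(P_{i+1})-\mathrm{pos}(P_i)$ is $(1,0),(-1,0),(0,1),(0,-1)$. The embedding $\mathrm{emb}(P)$ is the polygonal curve through $\mathrm{pos}(P_0),\mathrm{pos}(P_1),\dots$ in order. A glue pointing east or west is visible from the south (resp. north) if the vertical ray starting at its position and going down (resp. up) intersects neither $\mathrm{emb}(P)$ nor $\sigma$ (i.e., neither a tile position of $\sigma$ nor a unit segment joining two adjacent tile positions of $\sigma$). *)

theory Defs
  imports "HOL-Analysis.Analysis"
begin

datatype dir = North | East | South | West

type_synonym pos = "int \<times> int"
(* a tile type: on each side a glue, i.e. a glue type (label) and a nonnegative strength *)
type_synonym 'g tiletype = "dir \<Rightarrow> 'g \<times> nat"
type_synonym 'g tile = "pos \<times> 'g tiletype"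
type_synonym 'g assembly = "pos \<Rightarrow> 'g tiletype option"

fun dir_vec :: "dir \<Rightarrow> pos" where
  "dir_vec North = (0, 1)"
| "dir_vec East = (1, 0)"
| "dir_vec South = (0, -1)"
| "dir_vec West = (-1, 0)"

fun opp :: "dir \<Rightarrow> dir" where
  "opp North = South"
| "opp East = West"
| "opp South = North"
| "opp West = East"

definition shift :: "pos \<Rightarrow> dir \<Rightarrow> pos" where
  "shift p d = (fst p + fst (dir_vec d), snd p + snd (dir_vec d))"

definition adjacent :: "pos \<Rightarrow> pos \<Rightarrow> bool" where
  "adjacent p q \<longleftrightarrow> (\<exists>d. q = shift p d)"

definition interacts :: "'g tile \<Rightarrow> 'g tile \<Rightarrow> bool" where
  "interacts a b \<longleftrightarrow>
     (\<exists>d. fst b = shift (fst a) d \<and> snd a d = snd b (opp d) \<and> snd (snd a d) \<ge> 1)"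

inductive producible :: "'g tiletype set \<Rightarrow> 'g assembly \<Rightarrow> 'g assembly \<Rightarrow> bool"
  for T :: "'g tiletype set" and \<sigma> :: "'g assembly" where
  seed: "producible T \<sigma> \<sigma>"
| step: "\<lbrakk> producible T \<sigma> \<alpha>; \<alpha> p = None; t \<in> T; \<alpha> q = Some u; interacts (p, t) (q, u) \<rbrakk>
         \<Longrightarrow> producible T \<sigma> (\<alpha>(p \<mapsto> t))"

definition seed_bond :: "'g assembly \<Rightarrow> (pos \<times> pos) set" where
  "seed_bond \<sigma> = {(p, q). \<exists>t u. \<sigma> p = Some t \<and> \<sigma> q = Some u \<and> interacts (p, t) (q, u)}"

definition is_tas :: "'g tiletype set \<Rightarrow> 'g assembly \<Rightarrow> bool" where
  "is_tas T \<sigma> \<longleftrightarrow> finite T \<and> finite (dom \<sigma>) \<and>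
     (\<forall>p\<in>dom \<sigma>. \<forall>q\<in>dom \<sigma>. (p, q) \<in> (seed_bond \<sigma>)\<^sup>*)"

definition is_path :: "'g tile list \<Rightarrow> bool" where
  "is_path P \<longleftrightarrow> distinct (map fst P) \<and>
     (\<forall>k. Suc k < length P \<longrightarrow> interacts (P ! k) (P ! Suc k))"

definition producible_path :: "'g tiletype set \<Rightarrow> 'g assembly \<Rightarrow> 'g tile list \<Rightarrow> bool" where
  "producible_path T \<sigma> P \<longleftrightarrow> is_path P \<and> P \<noteq> [] \<and>
     (\<forall>k < length P. fst (P ! k) \<notin> dom \<sigma>) \<and>
     producible T \<sigma> (\<sigma> ++ map_of P) \<and>
     (\<exists>q u. \<sigma> q = Some u \<and> interacts (q, u) (P ! 0))"

definition rp :: "pos \<Rightarrow> real \<times> real" where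
  "rp p = (of_int (fst p), of_int (snd p))"

definition emb :: "'g tile list \<Rightarrow> (real \<times> real) set" where
  "emb P = rp ` fst ` set P \<union>
     (\<Union>k \<in> {k. Suc k < length P}. closed_segment (rp (fst (P ! k))) (rp (fst (P ! Suc k))))"

definition seed_set :: "'g assembly \<Rightarrow> (real \<times> real) set" where
  "seed_set \<sigma> = rp ` dom \<sigma> \<union>
     \<Union> {closed_segment (rp p) (rp q) | p q. p \<in> dom \<sigma> \<and> q \<in> dom \<sigma> \<and> adjacent p q}"

definition glue_pos :: "'g tile list \<Rightarrow> nat \<Rightarrow> real \<times> real" where
  "glue_pos P k = midpoint (rp (fst (P ! k))) (rp (fst (P ! Suc k)))"

definition glue_points :: "dir \<Rightarrow> 'g tile list \<Rightarrow> nat \<Rightarrow> bool" where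
  "glue_points d P k \<longleftrightarrow> fst (P ! Suc k) = shift (fst (P ! k)) d"

(* the ray starts at the glue position (excluded, as it lies on emb(P)) *)
definition visible_south :: "'g assembly \<Rightarrow> 'g tile list \<Rightarrow> nat \<Rightarrow> bool" where
  "visible_south \<sigma> P k \<longleftrightarrow> (glue_points East P k \<or> glue_points West P k) \<and>
     (\<forall>t::real > 0. (fst (glue_pos P k), snd (glue_pos P k) - t) \<notin> emb P \<union> seed_set \<sigma>)"

definition visible_north :: "'g assembly \<Rightarrow> 'g tile list \<Rightarrow> nat \<Rightarrow> bool" where
  "visible_north \<sigma> P k \<longleftrightarrow> (glue_points East P k \<or> glue_points West P k) \<and>
     (\<forall>t::real > 0. (fst (glue_pos P k), snd (glue_pos P k) + t) \<notin> emb P \<union> seed_set \<sigma>)"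

end

theory Submission
  imports Defs
begin


definition gd :: "(int \<times> int) list \<Rightarrow> nat \<Rightarrow> int \<times> int" where
  "gd ps m = (fst (ps!m) + fst (ps!Suc m), snd (ps!m) + snd (ps!Suc m))"

definition dbl :: "int \<times> int \<Rightarrow> int \<times> int" where
  "dbl p = (2 * fst p, 2 * snd p)"

lemma unit_cases:
  fixes a b c d :: int
  assumes "\<bar>c - a\<bar> + \<bar>d - b\<bar> = 1"
  shows "(c = a + 1 \<and> d = b) \<or> (c = a - 1 \<and> d = b) \<or> (c = a \<and> d = b + 1) \<or> (c = a \<and> d = b - 1)"
  using assms by arith

lemma gd_inj:
  assumes dist: "distinct ps"
    and adj: "\<And>m. Suc m < length ps \<Longrightarrow> \<bar>fst (ps!Suc m) - fst (ps!m)\<bar> + \<bar>snd (ps!Suc m) - snd (ps!m)\<bar> = 1"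
    and m: "Suc m < length ps" and m': "Suc m' < length ps"
    and eq: "gd ps m = gd ps m'"
  shows "m = m'"
proof -
  obtain a b c d where 1: "ps!m = (a,b)" "ps!Suc m = (c,d)" by (cases "ps!m", cases "ps!Suc m") auto
  obtain a' b' c' d' where 2: "ps!m' = (a',b')" "ps!Suc m' = (c',d')" by (cases "ps!m'", cases "ps!Suc m'") auto
  have u1: "\<bar>c - a\<bar> + \<bar>d - b\<bar> = 1" using adj[OF m] 1 by simp
  have u2: "\<bar>c' - a'\<bar> + \<bar>d' - b'\<bar> = 1" using adj[OF m'] 2 by simp
  have s: "a + c = a' + c'" "b + d = b' + d'" using eq 1 2 by (auto simp: gd_def)
  have "((a,b) = (a',b') \<and> (c,d) = (c',d')) \<or> ((a,b) = (c',d') \<and> (c,d) = (a',b'))"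
    using unit_cases[OF u1] unit_cases[OF u2] s by auto
  then show ?thesis
  proof
    assume "(a,b) = (a',b') \<and> (c,d) = (c',d')"
    then have "ps!m = ps!m'" using 1 2 by simp
    then show ?thesis using dist m m' nth_eq_iff_index_eq by fastforce
  next
    assume H: "(a,b) = (c',d') \<and> (c,d) = (a',b')"
    then have "ps!m = ps!Suc m'" "ps!Suc m = ps!m'" using 1 2 by auto
    then have "m = Suc m'" "Suc m = m'" using dist m m' nth_eq_iff_index_eq by fastforce+
    then show ?thesis by simp
  qed
qed

definition cr :: "int \<Rightarrow> int \<Rightarrow> int \<times> int \<Rightarrow> int \<times> int \<Rightarrow> nat" where
  "cr X lev u v = (if X < fst u \<and> ((snd u < lev) \<noteq> (snd v < lev)) then 1 else 0)"

definition st :: "int \<Rightarrow> int \<Rightarrow> int \<times> int \<Rightarrow> int \<times> int \<Rightarrow> nat" where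
  "st X r u v = (if snd u = r \<and> snd v = r \<and> ((X < fst u) \<noteq> (X < fst v)) then 1 else 0)"

definition gg :: "int \<Rightarrow> int \<Rightarrow> int \<times> int \<Rightarrow> nat" where
  "gg X r v = (if X < fst v \<and> snd v = r then 1 else 0)"

lemma edge_par:
  assumes "even (snd u)" "even (snd v)" "odd lev"
    and "snd u = snd v \<or> (fst u = fst v \<and> \<bar>snd u - snd v\<bar> \<le> 2)"
  shows "even (cr X lev u v + cr X (lev+2) u v + st X (lev+1) u v + gg X (lev+1) u + gg X (lev+1) v)"
proof -
  obtain a b c d where uv: "u = (a,b)" "v = (c,d)" by (cases u, cases v) auto
  have eb: "even b" "even d" using assms uv by auto
  have ab: "b = d \<or> (a = c \<and> \<bar>b - d\<bar> \<le> 2)" using assms uv by auto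
  show ?thesis
  proof (cases "b = d")
    case True then show ?thesis using uv by (auto simp: cr_def st_def gg_def)
  next
    case False
    then have ac: "a = c" and bd: "\<bar>b - d\<bar> \<le> 2" using ab by auto
    from eb obtain b' d' where "b = 2*b'" "d = 2*d'" by (auto elim!: evenE)
    moreover from assms obtain l' where "lev = 2*l'+1" by (auto elim!: oddE)
    ultimately show ?thesis using uv ac bd False by (auto simp: cr_def st_def gg_def)
  qed
qed

lemma tele:
  assumes "\<And>t. t < N \<Longrightarrow> even (a t + gg X r (w t) + gg X r (w (Suc t)))"
  shows "even ((\<Sum>t<N. a t) + gg X r (w 0) + gg X r (w N))"
  using assms
proof (induction N)
  case 0 then show ?case by simp
next
  case (Suc N)
  have "even ((\<Sum>t<N. a t) + gg X r (w 0) + gg X r (w N))" using Suc by auto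
  moreover have "even (a N + gg X r (w N) + gg X r (w (Suc N)))" using Suc by auto
  ultimately show ?case by (simp, presburger)
qed

lemma vert_generic:
  fixes w :: "nat \<Rightarrow> int \<times> int"
  assumes ev: "\<And>t. t \<le> N \<Longrightarrow> even (snd (w t))"
    and ed: "\<And>t. t < N \<Longrightarrow> snd (w t) = snd (w (Suc t)) \<or> (fst (w t) = fst (w (Suc t)) \<and> \<bar>snd (w t) - snd (w (Suc t))\<bar> \<le> 2)"
    and lev: "odd lev"
  shows "even ((if X < fst (w 0) \<and> lev < snd (w 0) then 1 else 0)
      + (if X < fst (w 0) \<and> lev + 2 < snd (w 0) then 1 else 0)
      + (if X < fst (w N) \<and> snd (w N) < lev then 1 else 0)
      + (if X < fst (w N) \<and> snd (w N) < lev + 2 then 1 else 0)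
      + (\<Sum>t<N. cr X lev (w t) (w (Suc t))) + (\<Sum>t<N. cr X (lev+2) (w t) (w (Suc t)))
      + (\<Sum>t<N. st X (lev+1) (w t) (w (Suc t))) :: nat)"
proof -
  have T: "even ((\<Sum>t<N. cr X lev (w t) (w (Suc t)) + cr X (lev+2) (w t) (w (Suc t)) + st X (lev+1) (w t) (w (Suc t)))
     + gg X (lev+1) (w 0) + gg X (lev+1) (w N))"
    by (rule tele, rule edge_par, insert ev ed lev, auto)
  have r0: "even ((if X < fst (w 0) \<and> lev < snd (w 0) then 1 else 0)
      + (if X < fst (w 0) \<and> lev + 2 < snd (w 0) then 1 else 0) + gg X (lev+1) (w 0) :: nat)"
  proof -
    obtain b where "snd (w 0) = 2*b" using ev[of 0] by (auto elim!: evenE)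
    moreover obtain l' where "lev = 2*l'+1" using lev by (auto elim!: oddE)
    ultimately show ?thesis by (auto simp: gg_def; presburger)
  qed
  have rN: "even ((if X < fst (w N) \<and> snd (w N) < lev then 1 else 0)
      + (if X < fst (w N) \<and> snd (w N) < lev + 2 then 1 else 0) + gg X (lev+1) (w N) :: nat)"
  proof -
    obtain b where "snd (w N) = 2*b" using ev[of N] by (auto elim!: evenE)
    moreover obtain l' where "lev = 2*l'+1" using lev by (auto elim!: oddE)
    ultimately show ?thesis by (auto simp: gg_def; presburger)
  qed
  show ?thesis using T r0 rN unfolding sum.distrib by presburger
qed


locale wk =
  fixes ps :: "(int \<times> int) list" and h :: nat
  assumes dist: "distinct ps"
    and adj: "\<And>m. Suc m < length ps \<Longrightarrow> \<bar>fst (ps!Suc m) - fst (ps!m)\<bar> + \<bar>snd (ps!Suc m) - snd (ps!m)\<bar> = 1"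
    and len: "2 \<le> length ps"
    and hK: "h \<le> length ps - 2"
    and hh: "snd (ps!Suc h) = snd (ps!h)"
    and hkk: "snd (ps!Suc (length ps - 2)) = snd (ps!(length ps - 2))"
    and visH: "\<And>m. Suc m < length ps \<Longrightarrow> fst (gd ps m) = fst (gd ps h) \<Longrightarrow> snd (gd ps m) < snd (gd ps h) \<Longrightarrow> False"
    and visN: "\<And>m. Suc m < length ps \<Longrightarrow> fst (gd ps m) = fst (gd ps (length ps - 2)) \<Longrightarrow> snd (gd ps (length ps - 2)) < snd (gd ps m) \<Longrightarrow> False"
begin

definition "K = length ps - 2"
definition "N = K - h + 1"
definition "wv t = (if t = 0 then gd ps h else if t \<le> K - h then dbl (ps!(h+t)) else gd ps K)"

definition "cnt X lev = (if X < fst (gd ps h) \<and> lev < snd (gd ps h) then 1 else 0)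
   + (if X < fst (gd ps K) \<and> snd (gd ps K) < lev then 1 else 0)
   + (\<Sum>t<N. cr X lev (wv t) (wv (Suc t)))"

definition "stS X r = (\<Sum>t<N. st X r (wv t) (wv (Suc t)))"

lemma hK': "h \<le> K" and SK: "Suc K < length ps" using hK len by (auto simp: K_def)

lemma adjK: "m \<le> K \<Longrightarrow> \<bar>fst (ps!Suc m) - fst (ps!m)\<bar> + \<bar>snd (ps!Suc m) - snd (ps!m)\<bar> = 1"
  using adj SK by auto

lemma wv0: "wv 0 = gd ps h" by (simp add: wv_def)
lemma wvN: "wv N = gd ps K" by (simp add: wv_def N_def)

lemma edge_cases:
  assumes "t < N"
  shows "(t = 0 \<and> h < K \<and> wv t = gd ps h \<and> wv (Suc t) = dbl (ps!Suc h))
    \<or> (0 < t \<and> h + t < K \<and> wv t = dbl (ps!(h+t)) \<and> wv (Suc t) = dbl (ps!Suc (h+t)))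
    \<or> (0 < t \<and> h + t = K \<and> wv t = dbl (ps!K) \<and> wv (Suc t) = gd ps K)
    \<or> (t = 0 \<and> h = K \<and> wv t = gd ps h \<and> wv (Suc t) = gd ps K)"
proof -
  consider "t = 0" "h < K" | "0 < t" "h + t < K" | "0 < t" "h + t = K" | "t = 0" "h = K"
    using assms hK' by (auto simp: N_def) linarith
  then show ?thesis
  proof cases
    case 3
    then have "K - h = t" by simp
    then show ?thesis using 3 by (auto simp: wv_def)
  next
    case 4
    then have "K - h = 0" by simp
    then show ?thesis using 4(1) \<open>h = K\<close> unfolding wv_def by simp
  qed (auto simp: wv_def)
qed

lemma gd_h: "gd ps h = (fst (ps!h) + fst (ps!Suc h), 2 * snd (ps!h))"
  using hh by (simp add: gd_def)
lemma gd_K: "gd ps K = (fst (ps!K) + fst (ps!Suc K), 2 * snd (ps!K))"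
  using hkk by (simp add: gd_def K_def)

lemma rows_even: "t \<le> N \<Longrightarrow> even (snd (wv t))"
  by (auto simp: wv_def gd_h gd_K dbl_def)

lemma edge_axis:
  assumes "t < N"
  shows "snd (wv t) = snd (wv (Suc t)) \<or> (fst (wv t) = fst (wv (Suc t)) \<and> \<bar>snd (wv t) - snd (wv (Suc t))\<bar> \<le> 2)"
  using edge_cases[OF assms]
proof (elim disjE conjE)
  assume "0 < t" "h + t < K" "wv t = dbl (ps!(h+t))" "wv (Suc t) = dbl (ps!Suc (h+t))"
  moreover have "\<bar>fst (ps!Suc (h+t)) - fst (ps!(h+t))\<bar> + \<bar>snd (ps!Suc (h+t)) - snd (ps!(h+t))\<bar> = 1"
    using adjK \<open>h + t < K\<close> by simp
  ultimately show ?thesis by (auto simp: dbl_def)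
qed (auto simp: gd_h gd_K dbl_def hh hkk)

lemma vert:
  assumes "odd lev"
  shows "even (cnt X lev + cnt X (lev+2) + stS X (lev+1))"
  using vert_generic[where w = wv and N = N and X = X and lev = lev, OF rows_even edge_axis assms]
  unfolding cnt_def stS_def wv0 wvN by (simp add: algebra_simps)


lemma C1:
  assumes t: "t < N" and X: "odd X" and s: "st X r (wv t) (wv (Suc t)) \<noteq> 0"
  shows "gd ps (h+t) = (X, r)"
  using edge_cases[OF t]
proof (elim disjE conjE)
  assume a: "t = 0" "h < K" "wv t = gd ps h" "wv (Suc t) = dbl (ps!Suc h)"
  have u: "\<bar>fst (ps!Suc h) - fst (ps!h)\<bar> = 1" using adjK[of h] a hh by simp
  show ?thesis using a s u X unfolding st_def gd_h dbl_def by (auto simp: gd_h split: if_splits; presburger?)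
next
  assume a: "0 < t" "h + t < K" "wv t = dbl (ps!(h+t))" "wv (Suc t) = dbl (ps!Suc (h+t))"
  have u: "\<bar>fst (ps!Suc (h+t)) - fst (ps!(h+t))\<bar> + \<bar>snd (ps!Suc (h+t)) - snd (ps!(h+t))\<bar> = 1" using adjK a by simp
  show ?thesis using a s u X unfolding st_def gd_def dbl_def by (auto split: if_splits; presburger?)
next
  assume a: "0 < t" "h + t = K" "wv t = dbl (ps!K)" "wv (Suc t) = gd ps K"
  have u: "\<bar>fst (ps!Suc K) - fst (ps!K)\<bar> = 1" using adjK[of K] a hkk by (simp add: K_def)
  show ?thesis using a s u X unfolding st_def gd_K dbl_def by (auto simp: gd_K split: if_splits; presburger?)
next
  assume a: "t = 0" "h = K" "wv t = gd ps h" "wv (Suc t) = gd ps K"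
  then show ?thesis using s by (simp add: st_def)
qed


lemma C2:
  assumes t: "t < N" and X: "even X" and s: "st X r (wv t) (wv (Suc t)) \<noteq> 0"
  shows "\<exists>m. h < m \<and> m \<le> K \<and> dbl (ps!m) = (X, r)"
  using edge_cases[OF t]
proof (elim disjE conjE)
  assume a: "t = 0" "h < K" "wv t = gd ps h" "wv (Suc t) = dbl (ps!Suc h)"
  have u: "\<bar>fst (ps!Suc h) - fst (ps!h)\<bar> = 1" using adjK[of h] a hh by simp
  have "dbl (ps!Suc h) = (X, r)"
    using a s u X unfolding st_def gd_h dbl_def by (auto simp: gd_h split: if_splits; presburger?)
  then show ?thesis using a by (intro exI[of _ "Suc h"]) auto
next
  assume a: "0 < t" "h + t < K" "wv t = dbl (ps!(h+t))" "wv (Suc t) = dbl (ps!Suc (h+t))"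
  have u: "\<bar>fst (ps!Suc (h+t)) - fst (ps!(h+t))\<bar> + \<bar>snd (ps!Suc (h+t)) - snd (ps!(h+t))\<bar> = 1" using adjK a by simp
  have "dbl (ps!(h+t)) = (X, r) \<or> dbl (ps!Suc (h+t)) = (X, r)"
    using a s u X unfolding st_def gd_def dbl_def by (auto split: if_splits; presburger?)
  then show ?thesis using a by (metis Suc_leI add_Suc_right le_add1 less_add_same_cancel1 less_imp_le_nat less_SucI)
next
  assume a: "0 < t" "h + t = K" "wv t = dbl (ps!K)" "wv (Suc t) = gd ps K"
  have u: "\<bar>fst (ps!Suc K) - fst (ps!K)\<bar> = 1" using adjK[of K] a hkk by (simp add: K_def)
  have "dbl (ps!K) = (X, r)"
    using a s u X unfolding st_def gd_K dbl_def by (auto simp: gd_K split: if_splits; presburger?)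
  then show ?thesis using a by (intro exI[of _ K]) auto
next
  assume a: "t = 0" "h = K" "wv t = gd ps h" "wv (Suc t) = gd ps K"
  then show ?thesis using s by (simp add: st_def)
qed

lemma C3:
  assumes t: "t < N" and lev: "odd lev" and c: "(snd (wv t) < lev) \<noteq> (snd (wv (Suc t)) < lev)"
  shows "\<exists>m. h < m \<and> m \<le> K \<and> dbl (ps!m) = (fst (wv t), lev - 1)"
  using edge_cases[OF t]
proof (elim disjE conjE)
  assume a: "0 < t" "h + t < K" "wv t = dbl (ps!(h+t))" "wv (Suc t) = dbl (ps!Suc (h+t))"
  have u: "\<bar>fst (ps!Suc (h+t)) - fst (ps!(h+t))\<bar> + \<bar>snd (ps!Suc (h+t)) - snd (ps!(h+t))\<bar> = 1" using adjK a by simp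
  have "dbl (ps!(h+t)) = (fst (wv t), lev - 1) \<or> dbl (ps!Suc (h+t)) = (fst (wv t), lev - 1)"
    using a c u lev unfolding dbl_def by (auto split: if_splits; presburger?)
  then show ?thesis using a by (metis Suc_leI add_Suc_right le_add1 less_add_same_cancel1 less_imp_le_nat less_SucI)
qed (use c in \<open>auto simp: gd_h gd_K dbl_def hh hkk\<close>)


end



lemma ar1: fixes a b c :: int
  shows "\<bar>b - a\<bar> = 1 \<Longrightarrow> min (2*a) (a+b) < 2*c \<Longrightarrow> 2*c \<le> max (2*a) (a+b) \<Longrightarrow> c = a"
  by arith

lemma ar2: fixes a b g :: int
  shows "\<bar>b - a\<bar> = 1 \<Longrightarrow> odd g \<Longrightarrow> min (2*a) (a+b) < g \<Longrightarrow> g \<le> max (2*a) (a+b) \<Longrightarrow> g = a+b"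
  by presburger

lemma ar3: fixes y l :: int
  shows "even y \<Longrightarrow> y < 2*l + 1 \<Longrightarrow> y \<le> 2*l"
  by (auto elim!: evenE)

context wk begin

lemma horiz:
  assumes XX: "X \<le> X'" and lev: "odd lev"
    and nv: "\<And>m c. h < m \<Longrightarrow> m \<le> K \<Longrightarrow> dbl (ps!m) = (c, lev - 1) \<Longrightarrow> X < c \<Longrightarrow> c \<le> X' \<Longrightarrow> False"
    and rh: "\<not> (X < fst (gd ps h) \<and> fst (gd ps h) \<le> X' \<and> lev < snd (gd ps h))"
    and rk: "\<not> (X < fst (gd ps K) \<and> fst (gd ps K) \<le> X' \<and> snd (gd ps K) < lev)"
  shows "cnt X lev = cnt X' lev"
proof -
  have "cr X lev (wv t) (wv (Suc t)) = cr X' lev (wv t) (wv (Suc t))" if t: "t < N" for t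
  proof (cases "(snd (wv t) < lev) \<noteq> (snd (wv (Suc t)) < lev)")
    case True
    from C3[OF t lev True] obtain m where "h < m" "m \<le> K" "dbl (ps!m) = (fst (wv t), lev - 1)" by blast
    then have "\<not> (X < fst (wv t) \<and> fst (wv t) \<le> X')" using nv by blast
    then show ?thesis using XX by (auto simp: cr_def)
  qed (auto simp: cr_def)
  then have "(\<Sum>t<N. cr X lev (wv t) (wv (Suc t))) = (\<Sum>t<N. cr X' lev (wv t) (wv (Suc t)))"
    by (intro sum.cong) auto
  moreover have "(X < fst (gd ps h) \<and> lev < snd (gd ps h)) = (X' < fst (gd ps h) \<and> lev < snd (gd ps h))"
    using rh XX by auto
  moreover have "(X < fst (gd ps K) \<and> snd (gd ps K) < lev) = (X' < fst (gd ps K) \<and> snd (gd ps K) < lev)"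
    using rk XX by auto
  ultimately show ?thesis unfolding cnt_def by simp
qed

lemma descent:
  assumes lev: "odd lev" and z: "\<And>u. u < s \<Longrightarrow> stS X (lev - 2 * int u - 1) = 0"
  shows "even (cnt X lev + cnt X (lev - 2 * int s))"
  using z
proof (induction s)
  case 0 then show ?case by simp
next
  case (Suc s)
  have ih: "even (cnt X lev + cnt X (lev - 2 * int s))" using Suc by auto
  have o: "odd (lev - 2 * int (Suc s))" using lev by simp
  have v: "even (cnt X (lev - 2 * int (Suc s)) + cnt X (lev - 2 * int (Suc s) + 2) + stS X (lev - 2 * int (Suc s) + 1))"
    by (rule vert[OF o])
  have e1: "lev - 2 * int (Suc s) + 2 = lev - 2 * int s" by simp
  have e2: "lev - 2 * int (Suc s) + 1 = lev - 2 * int s - 1" by simp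
  have "stS X (lev - 2 * int s - 1) = 0" using Suc.prems by auto
  with v ih show ?case unfolding e1 e2 by presburger
qed

lemma stS_odd:
  assumes "odd X" "\<And>t. t < N \<Longrightarrow> gd ps (h+t) \<noteq> (X, r)"
  shows "stS X r = 0"
  unfolding stS_def using C1 assms by (intro sum.neutral) blast

lemma stS_even:
  assumes "even X" "\<And>m. h < m \<Longrightarrow> m \<le> K \<Longrightarrow> dbl (ps!m) \<noteq> (X, r)"
  shows "stS X r = 0"
  unfolding stS_def using C2 assms by (intro sum.neutral) blast

definition "B = sum_list (map (\<lambda>p. nat \<bar>snd p\<bar>) ps)"

lemma rowB: "m < length ps \<Longrightarrow> - int B \<le> snd (ps!m)"
proof -
  assume m: "m < length ps"
  have "(map (\<lambda>p. nat \<bar>snd p\<bar>) ps) ! m \<le> B" unfolding B_def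
    by (rule elem_le_sum_list) (simp add: m)
  then have "nat \<bar>snd (ps!m)\<bar> \<le> B" using m by simp
  then show ?thesis by linarith
qed

lemma deep:
  assumes lv: "lev < - 2 * int B"
  shows "cnt X lev = (if X < fst (gd ps h) then 1 else 0)"
proof -
  have r: "- int B \<le> snd (ps!m)" if "m \<le> Suc K" for m using rowB SK that by auto
  have rg: "lev < snd (gd ps m)" if "m \<le> K" for m
    using r[of m] r[of "Suc m"] that lv unfolding gd_def by simp
  have rw: "lev < snd (wv t)" if "t \<le> N" for t
  proof (cases "t = 0")
    case True then show ?thesis using rg[OF hK'] by (simp add: wv_def)
  next
    case False
    show ?thesis
    proof (cases "t \<le> K - h")
      case True
      then have "h + t \<le> Suc K" using hK' by simp
      then show ?thesis using r[of "h+t"] lv False True by (simp add: wv_def dbl_def)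
    next
      case F2: False
      then show ?thesis using rg[of K] False by (simp add: wv_def)
    qed
  qed
  have "lev < snd (gd ps h)" using rw[of 0] by (simp add: wv0)
  moreover have "\<not> snd (gd ps K) < lev" using rw[of N] by (simp add: wvN)
  moreover have "cr X lev (wv t) (wv (Suc t)) = 0" if "t < N" for t
    using rw[of t] rw[of "Suc t"] that by (auto simp: cr_def)
  ultimately show ?thesis unfolding cnt_def by simp
qed


lemma ginj: "m \<le> K \<Longrightarrow> m' \<le> K \<Longrightarrow> gd ps m = gd ps m' \<Longrightarrow> m = m'"
proof -
  assume a: "m \<le> K" "m' \<le> K" "gd ps m = gd ps m'"
  have "Suc m < length ps" "Suc m' < length ps" using a SK by auto
  then show ?thesis using gd_inj[OF dist adj] a by blast
qed

lemma dinj: "m < length ps \<Longrightarrow> m' < length ps \<Longrightarrow> dbl (ps!m) = dbl (ps!m') \<Longrightarrow> m = m'"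
proof -
  assume a: "m < length ps" "m' < length ps" "dbl (ps!m) = dbl (ps!m')"
  then have "ps!m = ps!m'" by (auto simp: dbl_def prod_eq_iff)
  then show ?thesis using a dist nth_eq_iff_index_eq by blast
qed

lemma gd_odd: "m \<le> K \<Longrightarrow> snd (ps!Suc m) = snd (ps!m) \<Longrightarrow> odd (fst (gd ps m))"
proof -
  assume "m \<le> K" "snd (ps!Suc m) = snd (ps!m)"
  then have "\<bar>fst (ps!Suc m) - fst (ps!m)\<bar> = 1" using adjK by force
  then have "odd (fst (ps!m) + fst (ps!Suc m))" by presburger
  then show ?thesis unfolding gd_def by simp
qed

lemma gd_row: "snd (ps!Suc m) = snd (ps!m) \<Longrightarrow> snd (gd ps m) = 2 * snd (ps!m)"
  by (simp add: gd_def)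

definition "Cc q = 2 * fst (ps!q)"
definition "Lv q = 2 * snd (ps!q) + 1"

lemma at_h: "even (cnt (Cc h) (Lv h) + (if fst (ps!Suc h) = fst (ps!h) + 1 then 1 else 0))"
proof (cases "h = K")
  case True
  have "K - h = 0" using True by simp
  then have N1: "N = 1" by (simp add: N_def)
  have "wv (Suc 0) = gd ps K" unfolding wv_def using \<open>K - h = 0\<close> by simp
  then have w1: "wv (Suc 0) = gd ps h" using True by simp
  have u: "\<bar>fst (ps!Suc h) - fst (ps!h)\<bar> = 1" using adjK[of h] hK' hh by simp
  have d: "fst (ps!Suc h) = fst (ps!h) + 1 \<or> fst (ps!Suc h) = fst (ps!h) - 1" using u by arith
  have "cnt (Cc h) (Lv h) = (if fst (ps!Suc h) = fst (ps!h) + 1 then 1 else 0)"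
    unfolding cnt_def N1 using True[symmetric] d
    by (auto simp: wv0 w1 cr_def gd_h Cc_def Lv_def)
  then show ?thesis by simp
next
  case False
  then have hK2: "h < K" using hK' by simp
  have u: "\<bar>fst (ps!Suc h) - fst (ps!h)\<bar> = 1" using adjK[of h] hK' hh by simp
  have oG: "odd (fst (gd ps h))" using gd_odd[OF hK' hh] .
  have yh: "snd (gd ps h) = 2 * snd (ps!h)" using gd_row[OF hh] .
  have hor: "cnt (Cc h) (Lv h) = cnt (fst (gd ps h)) (Lv h)"
  proof -
    have nv: False if "h < m" "m \<le> K" "dbl (ps!m) = (c, Lv h - 1)"
      "min (Cc h) (fst (gd ps h)) < c" "c \<le> max (Cc h) (fst (gd ps h))" for m c
    proof -
      have "c = 2 * fst (ps!m)" using that by (simp add: dbl_def)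
      then have "fst (ps!m) = fst (ps!h)"
        using ar1[OF u, of "fst (ps!m)"] that unfolding Cc_def gd_def by simp
      then have "c = Cc h" using \<open>c = 2 * fst (ps!m)\<close> by (simp add: Cc_def)
      then have "dbl (ps!m) = dbl (ps!h)" using that by (simp add: dbl_def Cc_def Lv_def)
      moreover have "m < length ps" "h < length ps" using that SK hK' by auto
      ultimately have "m = h" using dinj by blast
      then show False using that by simp
    qed
    have rk: "\<not> (min (Cc h) (fst (gd ps h)) < fst (gd ps K) \<and> fst (gd ps K) \<le> max (Cc h) (fst (gd ps h)) \<and> snd (gd ps K) < Lv h)"
    proof
      assume a: "min (Cc h) (fst (gd ps h)) < fst (gd ps K) \<and> fst (gd ps K) \<le> max (Cc h) (fst (gd ps h)) \<and> snd (gd ps K) < Lv h"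
      have oK: "odd (fst (gd ps K))" using gd_odd[of K] hkk by (simp add: K_def)
      have ev: "even (snd (gd ps K))" using gd_K by simp
      have c: "fst (gd ps K) = fst (gd ps h)" using ar2[OF u oK] a unfolding Cc_def gd_def by simp
      have "snd (gd ps K) \<le> snd (gd ps h)" using ar3[OF ev] a yh unfolding Lv_def by simp
      moreover have "\<not> snd (gd ps K) < snd (gd ps h)"
      proof
        assume "snd (gd ps K) < snd (gd ps h)"
        then show False using visN[of h] c SK hK' by (simp add: K_def)
      qed
      ultimately have "gd ps K = gd ps h" using c by (simp add: prod_eq_iff)
      then show False using ginj[of K h] hK' hK2 by simp
    qed
    show ?thesis
    proof (cases "Cc h \<le> fst (gd ps h)")
      case True
      show ?thesis
        by (rule horiz[OF True]) (use nv rk True yh in \<open>auto simp: Lv_def\<close>)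
    next
      case False
      then have F: "fst (gd ps h) \<le> Cc h" by simp
      show ?thesis
        by (rule horiz[OF F, symmetric]) (use nv rk F yh in \<open>auto simp: Lv_def\<close>)
    qed
  qed
  have st0: "stS (fst (gd ps h)) (snd (gd ps h)) = (if fst (ps!Suc h) = fst (ps!h) + 1 then 1 else 0)"
  proof -
    have NS: "N = Suc (K - h)" by (simp add: N_def)
    have z: "st (fst (gd ps h)) (snd (gd ps h)) (wv (Suc t)) (wv (Suc (Suc t))) = 0" if "t < K - h" for t
    proof (rule ccontr)
      assume "st (fst (gd ps h)) (snd (gd ps h)) (wv (Suc t)) (wv (Suc (Suc t))) \<noteq> 0"
      then have "gd ps (h + Suc t) = (fst (gd ps h), snd (gd ps h))" using C1[of "Suc t"] that oG by (simp add: NS)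
      moreover have "h + Suc t \<le> K" using that hK' by simp
      ultimately have "h + Suc t = h" using ginj[of "h + Suc t" h] hK' by simp
      then show False by simp
    qed
    have "Suc 0 \<le> K - h" using hK2 by simp
    then have w1: "wv (Suc 0) = dbl (ps!Suc h)" by (simp add: wv_def)
    have "stS (fst (gd ps h)) (snd (gd ps h)) = st (fst (gd ps h)) (snd (gd ps h)) (wv 0) (wv (Suc 0))"
      unfolding stS_def NS sum.lessThan_Suc_shift using z by simp
    also have "\<dots> = (if fst (ps!Suc h) = fst (ps!h) + 1 then 1 else 0)"
      using u hh unfolding wv0 w1 st_def dbl_def gd_def by auto
    finally show ?thesis .
  qed
  have o: "odd (Lv h - 2)" by (simp add: Lv_def)
  have e1: "Lv h - 2 + 2 = Lv h" by simp
  have e2: "Lv h - 2 + 1 = snd (gd ps h)" using yh by (simp add: Lv_def)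
  have v1: "even (cnt (fst (gd ps h)) (Lv h - 2) + cnt (fst (gd ps h)) (Lv h) + stS (fst (gd ps h)) (snd (gd ps h)))"
    using vert[OF o, of "fst (gd ps h)"] unfolding e1 e2 .
  define s where "s = nat (Lv h + 2 * int B) + 1"
  have "- int B \<le> snd (ps!h)" using rowB hK' SK by simp
  then have low: "Lv h - 2 - 2 * int s < - 2 * int B" unfolding s_def Lv_def by simp
  have des: "even (cnt (fst (gd ps h)) (Lv h - 2) + cnt (fst (gd ps h)) (Lv h - 2 - 2 * int s))"
  proof (rule descent)
    show "odd (Lv h - 2)" by (simp add: Lv_def)
    fix u assume "u < s"
    show "stS (fst (gd ps h)) (Lv h - 2 - 2 * int u - 1) = 0"
    proof (rule stS_odd[OF oG])
      fix t assume t: "t < N"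
      show "gd ps (h+t) \<noteq> (fst (gd ps h), Lv h - 2 - 2 * int u - 1)"
      proof
        assume e: "gd ps (h+t) = (fst (gd ps h), Lv h - 2 - 2 * int u - 1)"
        have "Suc (h+t) < length ps" using t SK hK' by (simp add: N_def)
        then show False using visH[of "h+t"] e yh by (simp add: Lv_def)
      qed
    qed
  qed
  have dp: "cnt (fst (gd ps h)) (Lv h - 2 - 2 * int s) = 0" using deep[OF low] by simp
  show ?thesis using hor st0 v1 des dp by presburger
qed


lemma lv_odd: "odd (Lv q)" by (simp add: Lv_def)

end

locale wk2 = wk +
  fixes l :: nat
  assumes lh: "l < h"
    and ll: "snd (ps!Suc l) = snd (ps!l)"
    and visL: "\<And>m. Suc m < length ps \<Longrightarrow> fst (gd ps m) = fst (gd ps l) \<Longrightarrow> snd (gd ps m) < snd (gd ps l) \<Longrightarrow> False"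
begin

lemma lK: "l < K" using lh hK' by simp

lemma oddK: "odd (fst (gd ps K))" using gd_odd[of K] hkk by (simp add: K_def)
lemma oddH: "odd (fst (gd ps h))" using gd_odd[OF hK' hh] .
lemma evK: "even (snd (gd ps K))" using gd_K by simp
lemma evH: "even (snd (gd ps h))" using gd_h by simp

lemma notK: "q < h \<Longrightarrow> gd ps q \<noteq> gd ps K"
  using ginj[of q K] hK' by auto

lemma chain_step:
  assumes q: "l \<le> q" "q < h"
  shows "even (cnt (Cc q) (Lv q) + cnt (Cc (Suc q)) (Lv (Suc q)))"
proof -
  have qK: "q \<le> K" "Suc q \<le> K" using q hK' by auto
  have u: "\<bar>fst (ps!Suc q) - fst (ps!q)\<bar> + \<bar>snd (ps!Suc q) - snd (ps!q)\<bar> = 1" using adjK qK by simp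
  have len1: "q < length ps" "Suc q < length ps" using qK SK by auto
  show ?thesis
  proof (cases "snd (ps!Suc q) = snd (ps!q)")
    case True
    then have u1: "\<bar>fst (ps!Suc q) - fst (ps!q)\<bar> = 1" using u by simp
    have yq: "snd (gd ps q) = 2 * snd (ps!q)" using gd_row[OF True] .
    define X where "X = min (Cc q) (Cc (Suc q))"
    define X' where "X' = max (Cc q) (Cc (Suc q))"
    have gq: "fst (gd ps q) = X + 1" using u1 unfolding X_def Cc_def gd_def by (simp; arith)
    have LvS: "Lv (Suc q) = Lv q" using True by (simp add: Lv_def)
    have XX: "X \<le> X'" by (simp add: X_def X'_def)
    have nv: False if "h < m" "m \<le> K" "dbl (ps!m) = (c, Lv q - 1)" "X < c" "c \<le> X'" for m c
    proof -
      have c: "c = 2 * fst (ps!m)" "snd (ps!m) = snd (ps!q)" using that by (auto simp: dbl_def Lv_def)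
      have "fst (ps!m) = fst (ps!q) \<or> fst (ps!m) = fst (ps!Suc q)"
        using that(4,5) c u1 unfolding X_def X'_def Cc_def by arith
      then have "ps!m = ps!q \<or> ps!m = ps!Suc q" using c True by (auto simp: prod_eq_iff)
      moreover have "m < length ps" using that SK by simp
      ultimately have "m = q \<or> m = Suc q" using dist len1 nth_eq_iff_index_eq by metis
      then show False using that q by auto
    qed
    have rh: "\<not> (X < fst (gd ps h) \<and> fst (gd ps h) \<le> X' \<and> Lv q < snd (gd ps h))"
    proof
      assume a: "X < fst (gd ps h) \<and> fst (gd ps h) \<le> X' \<and> Lv q < snd (gd ps h)"
      have "fst (gd ps h) = X + 1" using a oddH u1 unfolding X_def X'_def Cc_def by presburger
      then show False using visH[of q] gq a yq len1 by (simp add: Lv_def)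
    qed
    have rk: "\<not> (X < fst (gd ps K) \<and> fst (gd ps K) \<le> X' \<and> snd (gd ps K) < Lv q)"
    proof
      assume a: "X < fst (gd ps K) \<and> fst (gd ps K) \<le> X' \<and> snd (gd ps K) < Lv q"
      have c: "fst (gd ps K) = fst (gd ps q)" using a oddK u1 gq unfolding X_def X'_def Cc_def by presburger
      have "snd (gd ps K) \<le> snd (gd ps q)" using ar3[OF evK] a yq unfolding Lv_def by simp
      moreover have "\<not> snd (gd ps K) < snd (gd ps q)"
      proof
        assume "snd (gd ps K) < snd (gd ps q)"
        then show False using visN[of q] c len1 by (simp add: K_def)
      qed
      ultimately have "gd ps q = gd ps K" using c by (simp add: prod_eq_iff)
      then show False using notK q by simp
    qed
    have "cnt X (Lv q) = cnt X' (Lv q)"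
      by (rule horiz[OF XX lv_odd]) (use nv rh rk in blast)+
    moreover have "{Cc q, Cc (Suc q)} = {X, X'}" by (auto simp: X_def X'_def)
    ultimately have "cnt (Cc q) (Lv q) = cnt (Cc (Suc q)) (Lv q)"
      by (metis X_def X'_def max_def min_def)
    then show ?thesis using LvS by simp
  next
    case False
    then have vq: "fst (ps!Suc q) = fst (ps!q)" "\<bar>snd (ps!Suc q) - snd (ps!q)\<bar> = 1" using u by arith+
    define lo where "lo = min (Lv q) (Lv (Suc q))"
    have CS: "Cc (Suc q) = Cc q" using vq by (simp add: Cc_def)
    have olo: "odd lo" by (simp add: lo_def min_def Lv_def)
    have z: "stS (Cc q) (lo + 1) = 0"
    proof (rule stS_even)
      show "even (Cc q)" by (simp add: Cc_def)
      fix m assume m: "h < m" "m \<le> K"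
      show "dbl (ps!m) \<noteq> (Cc q, lo + 1)"
      proof
        assume e: "dbl (ps!m) = (Cc q, lo + 1)"
        have "dbl (ps!m) = dbl (ps!q) \<or> dbl (ps!m) = dbl (ps!Suc q)"
          using e vq unfolding dbl_def lo_def Cc_def Lv_def by (auto simp: prod_eq_iff; arith?)
        moreover have "m < length ps" using m SK by simp
        ultimately have "m = q \<or> m = Suc q" using dinj len1 by blast
        then show False using m q by auto
      qed
    qed
    have v: "even (cnt (Cc q) lo + cnt (Cc q) (lo + 2) + stS (Cc q) (lo + 1))" using vert[OF olo] .
    have "{lo, lo + 2} = {Lv q, Lv (Suc q)}" using vq unfolding lo_def Lv_def by (auto; arith?)
    then show ?thesis using v z CS
      by (metis (no_types, lifting) add.commute add_0 doubleton_eq_iff)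
  qed
qed


lemma half_step: "even (cnt (Cc l) (Lv l) + cnt (fst (gd ps l)) (Lv l))"
proof -
  have lK': "l \<le> K" using lK by simp
  have u1: "\<bar>fst (ps!Suc l) - fst (ps!l)\<bar> = 1" using adjK[OF lK'] ll by simp
  have yl: "snd (gd ps l) = 2 * snd (ps!l)" using gd_row[OF ll] .
  have len1: "l < length ps" "Suc l < length ps" using lK SK by auto
  define X where "X = min (Cc l) (fst (gd ps l))"
  define X' where "X' = max (Cc l) (fst (gd ps l))"
  have XX: "X \<le> X'" by (simp add: X_def X'_def)
  have nv: False if "h < m" "m \<le> K" "dbl (ps!m) = (c, Lv l - 1)" "X < c" "c \<le> X'" for m c
  proof -
    have c: "c = 2 * fst (ps!m)" "snd (ps!m) = snd (ps!l)" using that by (auto simp: dbl_def Lv_def)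
    have "fst (ps!m) = fst (ps!l)"
      using ar1[OF u1, of "fst (ps!m)"] that(4,5) c unfolding X_def X'_def Cc_def gd_def by simp
    then have "ps!m = ps!l" using c by (auto simp: prod_eq_iff)
    moreover have "m < length ps" using that SK by simp
    ultimately have "m = l" using dist len1 nth_eq_iff_index_eq by metis
    then show False using that lh by auto
  qed
  have rh: "\<not> (X < fst (gd ps h) \<and> fst (gd ps h) \<le> X' \<and> Lv l < snd (gd ps h))"
  proof
    assume a: "X < fst (gd ps h) \<and> fst (gd ps h) \<le> X' \<and> Lv l < snd (gd ps h)"
    have "fst (gd ps h) = fst (gd ps l)" using ar2[OF u1 oddH] a unfolding X_def X'_def Cc_def gd_def by simp
    then show False using visH[of l] a yl len1 by (simp add: Lv_def)
  qed
  have rk: "\<not> (X < fst (gd ps K) \<and> fst (gd ps K) \<le> X' \<and> snd (gd ps K) < Lv l)"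
  proof
    assume a: "X < fst (gd ps K) \<and> fst (gd ps K) \<le> X' \<and> snd (gd ps K) < Lv l"
    have c: "fst (gd ps K) = fst (gd ps l)" using ar2[OF u1 oddK] a unfolding X_def X'_def Cc_def gd_def by simp
    have "snd (gd ps K) \<le> snd (gd ps l)" using ar3[OF evK] a yl unfolding Lv_def by simp
    moreover have "\<not> snd (gd ps K) < snd (gd ps l)"
    proof
      assume "snd (gd ps K) < snd (gd ps l)"
      then show False using visN[of l] c len1 by (simp add: K_def)
    qed
    ultimately have "gd ps l = gd ps K" using c by (simp add: prod_eq_iff)
    then show False using notK lh by simp
  qed
  have "cnt X (Lv l) = cnt X' (Lv l)"
    by (rule horiz[OF XX lv_odd]) (use nv rh rk in blast)+
  then have "cnt (Cc l) (Lv l) = cnt (fst (gd ps l)) (Lv l)"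
    by (metis X_def X'_def max_def min_def)
  then show ?thesis by simp
qed

lemma at_l: "even (cnt (fst (gd ps l)) (Lv l) + (if fst (gd ps l) < fst (gd ps h) then 1 else 0))"
proof -
  have lK': "l \<le> K" using lK by simp
  have oL: "odd (fst (gd ps l))" using gd_odd[OF lK' ll] .
  have yl: "snd (gd ps l) = 2 * snd (ps!l)" using gd_row[OF ll] .
  define s where "s = nat (Lv l + 2 * int B) + 1"
  have "- int B \<le> snd (ps!l)" using rowB lK' SK by simp
  then have low: "Lv l - 2 * int s < - 2 * int B" unfolding s_def Lv_def by simp
  have des: "even (cnt (fst (gd ps l)) (Lv l) + cnt (fst (gd ps l)) (Lv l - 2 * int s))"
  proof (rule descent[OF lv_odd])
    fix u assume "u < s"
    show "stS (fst (gd ps l)) (Lv l - 2 * int u - 1) = 0"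
    proof (rule stS_odd[OF oL])
      fix t assume t: "t < N"
      show "gd ps (h+t) \<noteq> (fst (gd ps l), Lv l - 2 * int u - 1)"
      proof
        assume e: "gd ps (h+t) = (fst (gd ps l), Lv l - 2 * int u - 1)"
        have ht: "h + t \<le> K" using t hK' by (simp add: N_def)
        then have "Suc (h+t) < length ps" using SK by simp
        then have "\<not> snd (gd ps (h+t)) < snd (gd ps l)" using visL[of "h+t"] e by auto
        then have "gd ps (h+t) = gd ps l" using e yl by (simp add: Lv_def prod_eq_iff)
        then have "h + t = l" using ginj[OF ht lK'] by simp
        then show False using lh by simp
      qed
    qed
  qed
  show ?thesis using des deep[OF low] by simp
qed

lemma chain: "d \<le> h - l \<Longrightarrow> even (cnt (Cc (h - d)) (Lv (h - d)) + cnt (Cc h) (Lv h))"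
proof (induction d)
  case 0 then show ?case by simp
next
  case (Suc d)
  then have ih: "even (cnt (Cc (h - d)) (Lv (h - d)) + cnt (Cc h) (Lv h))" by simp
  have q: "l \<le> h - Suc d" "h - Suc d < h" using Suc.prems lh by auto
  have e: "Suc (h - Suc d) = h - d" using Suc.prems lh by simp
  have "even (cnt (Cc (h - Suc d)) (Lv (h - Suc d)) + cnt (Cc (h - d)) (Lv (h - d)))"
    using chain_step[OF q] unfolding e .
  then show ?case using ih by presburger
qed

theorem key: "fst (ps!Suc h) = fst (ps!h) + 1 \<longleftrightarrow> fst (gd ps l) < fst (gd ps h)"
proof -
  have c: "even (cnt (Cc l) (Lv l) + cnt (Cc h) (Lv h))" using chain[of "h - l"] lh by simp
  show ?thesis using c at_h half_step at_l by (auto split: if_splits; presburger)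
qed

end


lemma core:
  fixes ps :: "(int \<times> int) list"
  assumes dist: "distinct ps"
    and adj: "\<And>m. Suc m < length ps \<Longrightarrow> \<bar>fst (ps!Suc m) - fst (ps!m)\<bar> + \<bar>snd (ps!Suc m) - snd (ps!m)\<bar> = 1"
    and len: "2 \<le> length ps"
    and i: "i \<le> length ps - 2" and j: "j \<le> length ps - 2"
    and hi: "snd (ps!Suc i) = snd (ps!i)" and hj: "snd (ps!Suc j) = snd (ps!j)"
    and hkk: "snd (ps!Suc (length ps - 2)) = snd (ps!(length ps - 2))"
    and vi: "\<And>m. Suc m < length ps \<Longrightarrow> fst (gd ps m) = fst (gd ps i) \<Longrightarrow> snd (gd ps m) < snd (gd ps i) \<Longrightarrow> False"
    and vj: "\<And>m. Suc m < length ps \<Longrightarrow> fst (gd ps m) = fst (gd ps j) \<Longrightarrow> snd (gd ps m) < snd (gd ps j) \<Longrightarrow> False"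
    and visN: "\<And>m. Suc m < length ps \<Longrightarrow> fst (gd ps m) = fst (gd ps (length ps - 2)) \<Longrightarrow> snd (gd ps (length ps - 2)) < snd (gd ps m) \<Longrightarrow> False"
  shows "(fst (ps!Suc i) = fst (ps!i) + 1 \<and> fst (ps!i) < fst (ps!j) \<longrightarrow> i < j \<and> fst (ps!Suc j) = fst (ps!j) + 1)
       \<and> (fst (ps!Suc i) = fst (ps!i) - 1 \<and> fst (ps!i) > fst (ps!j) \<longrightarrow> i < j \<and> fst (ps!Suc j) = fst (ps!j) - 1)"
proof -
  have li: "Suc i < length ps" and lj: "Suc j < length ps" using i j len by auto
  have ui: "\<bar>fst (ps!Suc i) - fst (ps!i)\<bar> = 1" using adj[OF li] hi by simp
  have uj: "\<bar>fst (ps!Suc j) - fst (ps!j)\<bar> = 1" using adj[OF lj] hj by simp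
  have samecol: "i = j" if "fst (gd ps i) = fst (gd ps j)"
  proof -
    have "\<not> snd (gd ps i) < snd (gd ps j)" using vj[OF li] that by auto
    moreover have "\<not> snd (gd ps j) < snd (gd ps i)" using vi[OF lj] that by auto
    ultimately have "gd ps i = gd ps j" using that by (simp add: prod_eq_iff)
    then show ?thesis using gd_inj[OF dist adj li lj] by simp
  qed
  have key_ij: "fst (ps!Suc j) = fst (ps!j) + 1 \<longleftrightarrow> fst (gd ps i) < fst (gd ps j)" if "i < j"
  proof -
    interpret wk2 ps j i
      by (unfold_locales) (use dist adj len j hj hkk vj visN that hi vi in auto)
    show ?thesis by (rule key)
  qed
  have key_ji: "fst (ps!Suc i) = fst (ps!i) + 1 \<longleftrightarrow> fst (gd ps j) < fst (gd ps i)" if "j < i"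
  proof -
    interpret wk2 ps i j
      by (unfold_locales) (use dist adj len i hi hkk vi visN that hj vj in auto)
    show ?thesis by (rule key)
  qed
  have gi: "fst (gd ps i) = fst (ps!i) + fst (ps!Suc i)" and gj: "fst (gd ps j) = fst (ps!j) + fst (ps!Suc j)"
    by (simp_all add: gd_def)
  show ?thesis
  proof (intro conjI impI; elim conjE)
    assume e: "fst (ps!Suc i) = fst (ps!i) + 1" and x: "fst (ps!i) < fst (ps!j)"
    have le: "fst (gd ps i) \<le> fst (gd ps j)" using e x uj gi gj by arith
    have ne: "i \<noteq> j" using x by auto
    show "i < j"
    proof (rule ccontr)
      assume "\<not> i < j" then have "j < i" using ne by simp
      then show False using key_ji e le by simp
    qed
    then have "fst (gd ps i) < fst (gd ps j)" using le samecol ne by fastforce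
    then show "fst (ps!Suc j) = fst (ps!j) + 1" using key_ij \<open>i < j\<close> by simp
  next
    assume e: "fst (ps!Suc i) = fst (ps!i) - 1" and x: "fst (ps!j) < fst (ps!i)"
    have le: "fst (gd ps j) \<le> fst (gd ps i)" using e x uj gi gj by arith
    have ne: "i \<noteq> j" using x by auto
    have lt: "fst (gd ps j) < fst (gd ps i)" using le samecol ne by fastforce
    show "i < j"
    proof (rule ccontr)
      assume "\<not> i < j" then have "j < i" using ne by simp
      then show False using key_ji e lt by simp
    qed
    then have "\<not> fst (ps!Suc j) = fst (ps!j) + 1" using key_ij lt by simp
    then show "fst (ps!Suc j) = fst (ps!j) - 1" using uj by arith
  qed
qed



lemma gp:
  assumes "Suc m < length P"
  shows "glue_pos P m = (real_of_int (fst (gd (map fst P) m)) / 2, real_of_int (snd (gd (map fst P) m)) / 2)"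
  using assms unfolding glue_pos_def midpoint_def rp_def gd_def
  by (simp add: prod_eq_iff)

lemma gemb:
  assumes "Suc m < length P"
  shows "glue_pos P m \<in> emb P"
proof -
  have "glue_pos P m \<in> closed_segment (rp (fst (P ! m))) (rp (fst (P ! Suc m)))"
    unfolding glue_pos_def by simp
  then show ?thesis unfolding emb_def using assms by blast
qed

lemma vis_S:
  assumes v: "visible_south \<sigma> P l" and l: "Suc l < length P"
    and m: "Suc m < length (map fst P)"
    and c: "fst (gd (map fst P) m) = fst (gd (map fst P) l)"
    and r: "snd (gd (map fst P) m) < snd (gd (map fst P) l)"
  shows False
proof -
  define t where "t = (real_of_int (snd (gd (map fst P) l)) - real_of_int (snd (gd (map fst P) m))) / 2"
  have t: "t > 0" using r unfolding t_def by simp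
  have m': "Suc m < length P" using m by simp
  have "(fst (glue_pos P l), snd (glue_pos P l) - t) = glue_pos P m"
    unfolding gp[OF l] gp[OF m'] t_def using c by (simp add: field_simps)
  then have "(fst (glue_pos P l), snd (glue_pos P l) - t) \<in> emb P" using gemb[OF m'] by simp
  then show False using v t unfolding visible_south_def by blast
qed

lemma vis_N:
  assumes v: "visible_north \<sigma> P l" and l: "Suc l < length P"
    and m: "Suc m < length (map fst P)"
    and c: "fst (gd (map fst P) m) = fst (gd (map fst P) l)"
    and r: "snd (gd (map fst P) l) < snd (gd (map fst P) m)"
  shows False
proof -
  define t where "t = (real_of_int (snd (gd (map fst P) m)) - real_of_int (snd (gd (map fst P) l))) / 2"
  have t: "t > 0" using r unfolding t_def by simp
  have m': "Suc m < length P" using m by simp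
  have "(fst (glue_pos P l), snd (glue_pos P l) + t) = glue_pos P m"
    unfolding gp[OF l] gp[OF m'] t_def using c by (simp add: field_simps)
  then have "(fst (glue_pos P l), snd (glue_pos P l) + t) \<in> emb P" using gemb[OF m'] by simp
  then show False using v t unfolding visible_north_def by blast
qed

lemma gpE: "glue_points East P m \<longleftrightarrow> fst (P!Suc m) = (fst (fst (P!m)) + 1, snd (fst (P!m)))"
  by (simp add: glue_points_def shift_def)
lemma gpW: "glue_points West P m \<longleftrightarrow> fst (P!Suc m) = (fst (fst (P!m)) - 1, snd (fst (P!m)))"
  by (simp add: glue_points_def shift_def)

lemma horiz_of: "glue_points East P m \<or> glue_points West P m \<Longrightarrow> snd (fst (P!Suc m)) = snd (fst (P!m))"
  by (auto simp: gpE gpW)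

lemma adj_of:
  assumes "is_path P" "Suc m < length P"
  shows "\<bar>fst (fst (P!Suc m)) - fst (fst (P!m))\<bar> + \<bar>snd (fst (P!Suc m)) - snd (fst (P!m))\<bar> = 1"
proof -
  obtain d where "fst (P!Suc m) = shift (fst (P!m)) d"
    using assms unfolding is_path_def interacts_def by blast
  then show ?thesis by (cases d) (auto simp: shift_def)
qed

theorem mainTheorem2:
  fixes T :: "'g tiletype set" and \<sigma> :: "'g assembly" and P :: "'g tile list" and i j :: nat
  assumes "is_tas T \<sigma>"
    and "producible_path T \<sigma> P"
    and "length P \<ge> 2"
    and "visible_north \<sigma> P (length P - 2)"
    and "i \<le> length P - 2" and "j \<le> length P - 2"
  shows "(visible_south \<sigma> P i \<and> visible_south \<sigma> P j \<and> glue_points East P i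
            \<and> fst (fst (P ! i)) < fst (fst (P ! j))
          \<longrightarrow> i < j \<and> glue_points East P j)
       \<and> (visible_south \<sigma> P i \<and> visible_south \<sigma> P j \<and> glue_points West P i
            \<and> fst (fst (P ! i)) > fst (fst (P ! j))
          \<longrightarrow> i < j \<and> glue_points West P j)"
proof -
  define ps where "ps = map fst P"
  have path: "is_path P" using assms(2) unfolding producible_path_def by simp
  have dist: "distinct ps" using path unfolding is_path_def ps_def by simp
  have lps: "length ps = length P" by (simp add: ps_def)
  have nth: "\<And>m. m < length P \<Longrightarrow> ps!m = fst (P!m)" by (simp add: ps_def)
  have adj: "\<bar>fst (ps!Suc m) - fst (ps!m)\<bar> + \<bar>snd (ps!Suc m) - snd (ps!m)\<bar> = 1" if "Suc m < length ps" for m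
    using adj_of[OF path, of m] that nth[of m] nth[of "Suc m"] lps by simp
  have li: "Suc i < length P" and lj: "Suc j < length P" and lk: "Suc (length P - 2) < length P"
    using assms(3,5,6) by auto
  have hk: "snd (ps!Suc (length ps - 2)) = snd (ps!(length ps - 2))"
    using horiz_of[of P "length P - 2"] assms(4) lk nth lps unfolding visible_north_def
    by (metis Suc_lessD)
  have vN: "\<And>m. Suc m < length ps \<Longrightarrow> fst (gd ps m) = fst (gd ps (length ps - 2)) \<Longrightarrow> snd (gd ps (length ps - 2)) < snd (gd ps m) \<Longrightarrow> False"
    using vis_N[OF assms(4) lk] unfolding ps_def by (simp add: lps[unfolded ps_def])
  show ?thesis
  proof (intro conjI impI; elim conjE)
    assume vi: "visible_south \<sigma> P i" and vj: "visible_south \<sigma> P j"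
    have hi: "snd (ps!Suc i) = snd (ps!i)" using horiz_of[of P i] vi li nth unfolding visible_south_def by (metis Suc_lessD)
    have hj: "snd (ps!Suc j) = snd (ps!j)" using horiz_of[of P j] vj lj nth unfolding visible_south_def by (metis Suc_lessD)
    have vi': "\<And>m. Suc m < length ps \<Longrightarrow> fst (gd ps m) = fst (gd ps i) \<Longrightarrow> snd (gd ps m) < snd (gd ps i) \<Longrightarrow> False"
      using vis_S[OF vi li] unfolding ps_def by blast
    have vj': "\<And>m. Suc m < length ps \<Longrightarrow> fst (gd ps m) = fst (gd ps j) \<Longrightarrow> snd (gd ps m) < snd (gd ps j) \<Longrightarrow> False"
      using vis_S[OF vj lj] unfolding ps_def by blast
    note C = core[OF dist adj _ _ _ hi hj hk vi' vj' vN] 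
    have C': "(fst (ps!Suc i) = fst (ps!i) + 1 \<and> fst (ps!i) < fst (ps!j) \<longrightarrow> i < j \<and> fst (ps!Suc j) = fst (ps!j) + 1)
       \<and> (fst (ps!Suc i) = fst (ps!i) - 1 \<and> fst (ps!i) > fst (ps!j) \<longrightarrow> i < j \<and> fst (ps!Suc j) = fst (ps!j) - 1)"
      by (rule C) (use assms(3,5,6) lps in auto)
    have pi: "ps!i = fst (P!i)" "ps!Suc i = fst (P!Suc i)" "ps!j = fst (P!j)" "ps!Suc j = fst (P!Suc j)"
      using nth li lj by auto
    {
      assume e: "glue_points East P i" and x: "fst (fst (P ! i)) < fst (fst (P ! j))"
      have "fst (ps!Suc i) = fst (ps!i) + 1" using e pi by (simp add: gpE)
      then have r: "i < j \<and> fst (ps!Suc j) = fst (ps!j) + 1" using C' x pi by simp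
      then show "i < j" by simp
      show "glue_points East P j" using r hj pi by (simp add: gpE prod_eq_iff)
    }
    {
      assume e: "glue_points West P i" and x: "fst (fst (P ! i)) > fst (fst (P ! j))"
      have "fst (ps!Suc i) = fst (ps!i) - 1" using e pi by (simp add: gpW)
      then have r: "i < j \<and> fst (ps!Suc j) = fst (ps!j) - 1" using C' x pi by simp
      then show "i < j" by simp
      show "glue_points West P j" using r hj pi by (simp add: gpW prod_eq_iff)
    }
  qed
qed

end
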